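(* Let $I\subseteq\mathbb{R}$ be an interval, let $f:I\to\mathbb{R}$ be differentiable on the interior $I^{\circ}$, let $a,b\in I^{\circ}$ with $a<b$, assume $f'\in L[a,b]$, and let $\alpha,\lambda\in[0,1]$. Suppose that $|f'|^{q}$ is convex on $[a,b]$ for some $q>1$, and let $p$ satisfy $\frac1p+\frac1q=1$. Define $$I_f(\lambda,\alpha,a,b)=\lambda\big(\alpha f(a)+(1-\alpha)f(b)\big)+(1-\lambda)f(\alpha a+(1-\alpha)b)-\frac{1}{b-a}\int_a^b f(x)\,dx,$$ $$C_f(\alpha,q)=(1-\alpha)\big[|f'((1-\alpha)b+\alpha a)|^q+|f'(a)|^q\big],\qquad D_f(\alpha,q)=\alpha\big[|f'((1-\alpha)b+\alpha a)|^q+|f'(b)|^q\big],$$ $$\varepsilon_1(\alpha,\lambda,p)=(\alpha\lambda)^{p+1}+(1-\alpha-\alpha\lambda)^{p+1},\qquad \varepsilon_2(\alpha,\lambda,p)=(\alpha\lambda)^{p+1}-(\alpha\lambda-1+\alpha)^{p+1}.$$ Then $|I_f(\lambda,\alpha,a,b)|\leq (b-a)\left(\frac{1}{p+1}\right)^{1/p}\left(\frac{1}{2}\right)^{1/q}\cdot K$, where $K=\varepsilon_1^{1/p}(\alpha,\lambda,p)C_f^{1/q}(\alpha,q)+\varepsilon_1^{1/p}(1-\alpha,\lambda,p)D_f^{1/q}(\alpha,q)$ if $\alpha\lambda\leq 1-\alpha\leq 1-\lambda(1-\alpha)$; $K=\varepsilon_1^{1/p}(\alpha,\lambda,p)C_f^{1/q}(\alpha,q)+\varepsilon_2^{1/p}(1-\alpha,\lambda,p)D_f^{1/q}(\alpha,q)$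 if $\alpha\lambda\leq 1-\lambda(1-\alpha)\leq 1-\alpha$; $K=\varepsilon_2^{1/p}(\alpha,\lambda,p)C_f^{1/q}(\alpha,q)+\varepsilon_1^{1/p}(1-\alpha,\lambda,p)D_f^{1/q}(\alpha,q)$ if $1-\alpha\leq\alpha\lambda\leq 1-\lambda(1-\alpha)$. *)

theory Defs
  imports "HOL-Analysis.Analysis"
begin

definition I_f :: "(real \<Rightarrow> real) \<Rightarrow> real \<Rightarrow> real \<Rightarrow> real \<Rightarrow> real \<Rightarrow> real" where
  "I_f f lam al a b =
     lam * (al * f a + (1 - al) * f b) + (1 - lam) * f (al * a + (1 - al) * b)
     - (1 / (b - a)) * integral {a..b} f"

definition C_f :: "(real \<Rightarrow> real) \<Rightarrow> real \<Rightarrow> real \<Rightarrow> real \<Rightarrow> real \<Rightarrow> real" where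
  "C_f f' a b al q = (1 - al) * (\<bar>f' ((1 - al) * b + al * a)\<bar> powr q + \<bar>f' a\<bar> powr q)"

definition D_f :: "(real \<Rightarrow> real) \<Rightarrow> real \<Rightarrow> real \<Rightarrow> real \<Rightarrow> real \<Rightarrow> real" where
  "D_f f' a b al q = al * (\<bar>f' ((1 - al) * b + al * a)\<bar> powr q + \<bar>f' b\<bar> powr q)"

definition eps1 :: "real \<Rightarrow> real \<Rightarrow> real \<Rightarrow> real" where
  "eps1 al lam p = (al * lam) powr (p + 1) + (1 - al - al * lam) powr (p + 1)"

definition eps2 :: "real \<Rightarrow> real \<Rightarrow> real \<Rightarrow> real" where
  "eps2 al lam p = (al * lam) powr (p + 1) - (al * lam - 1 + al) powr (p + 1)"

end

theory Submission imports Defs begin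

lemma sq_div: fixes d X :: real assumes "d \<noteq> 0" shows "d^2 * X / (2 * d) = d * X / 2"
  using assms by (simp add: power2_eq_square)

lemma convex_bound:
  fixes h :: "real \<Rightarrow> real"
  assumes "s < e" "convex_on {s..e} h" "x \<in> {s..e}"
  shows "h x \<le> ((e - x) * h s + (x - s) * h e) / (e - s)"
proof -
  define t where "t = (x - s) / (e - s)"
  have t0: "0 \<le> t" "t \<le> 1" using assms by (auto simp: t_def field_simps)
  have te: "t * (e - s) = x - s" using assms(1) by (simp add: t_def)
  have xe: "x = (1 - t) *\<^sub>R s + t *\<^sub>R e" using te by (simp add: algebra_simps)
  have "h x \<le> (1 - t) * h s + t * h e"
    using convex_onD[OF assms(2) t0, of s e] assms(1) xe by simp
  also have "\<dots> = ((e - x) * h s + (x - s) * h e) / (e - s)"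
  proof -
    have ne: "e - s \<noteq> 0" using assms(1) by simp
    have "1 - t = (e - x) / (e - s)" using ne by (simp add: t_def field_simps)
    then show ?thesis by (simp add: t_def add_divide_distrib)
  qed
  finally show ?thesis .
qed

lemma linear_integral:
  fixes s e A B :: real
  assumes "s < e"
  shows "((\<lambda>x. ((e - x) * A + (x - s) * B) / (e - s)) has_integral (e - s) * (A + B) / 2) {s..e}"
proof -
  define F where "F x = ((x - s)^2 * B - (e - x)^2 * A) / (2 * (e - s))" for x
  have "((\<lambda>x. ((e - x) * A + (x - s) * B) / (e - s)) has_integral (F e - F s)) {s..e}"
  proof (rule fundamental_theorem_of_calculus)
    show "s \<le> e" using assms by simp
    fix x assume "x \<in> {s..e}"
    have "(F has_real_derivative ((e - x) * A + (x - s) * B) / (e - s)) (at x within {s..e})"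
      unfolding F_def using assms
      apply (auto intro!: derivative_eq_intros)
      apply (simp add: divide_simps)
      apply (simp add: algebra_simps)
      done
    then show "(F has_vector_derivative ((e - x) * A + (x - s) * B) / (e - s)) (at x within {s..e})"
      by (simp add: has_real_derivative_iff_has_vector_derivative)
  qed
  moreover have "F e - F s = (e - s) * (A + B) / 2"
  proof -
    have ne: "e - s \<noteq> 0" using assms(1) by simp
    have "F e - F s = (e - s)^2 * (A + B) / (2 * (e - s))"
      by (simp add: F_def diff_divide_distrib[symmetric] algebra_simps power2_eq_square)
    also have "\<dots> = (e - s) * (A + B) / 2" using sq_div[OF ne] by simp
    finally show ?thesis .
  qed
  ultimately show ?thesis by simp
qed

lemma holder_bound:
  fixes F G :: "real \<Rightarrow> real"
  assumes "p > 1" "q > 1" "1/p + 1/q = 1"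
    and F0: "\<And>x. x \<in> S \<Longrightarrow> F x \<ge> 0" and G0: "\<And>x. x \<in> S \<Longrightarrow> G x \<ge> 0"
    and iF: "((\<lambda>x. F x powr p) has_integral A) S"
    and iG: "(\<lambda>x. G x powr q) integrable_on S" and GM: "integral S (\<lambda>x. G x powr q) \<le> M"
    and iFG: "(\<lambda>x. F x * G x) integrable_on S"
    and A0: "A > 0" and M0: "M > 0"
  shows "integral S (\<lambda>x. F x * G x) \<le> A powr (1/p) * M powr (1/q)"
proof -
  define a where "a = A powr (1/p)"
  define m where "m = M powr (1/q)"
  have a0: "a > 0" and m0: "m > 0" using A0 M0 by (auto simp: a_def m_def)
  have ap: "a powr p = A" using A0 assms(1) by (simp add: a_def powr_powr)
  have mq: "m powr q = M" using M0 assms(2) by (simp add: m_def powr_powr)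
  have pw: "(F x / a) * (G x / m) \<le> F x powr p / (p * A) + G x powr q / (q * M)" if "x \<in> S" for x
  proof -
    have "(F x / a) * (G x / m) \<le> (F x / a) powr p / p + (G x / m) powr q / q"
      using Youngs_inequality[OF assms(1-3), of "F x / a" "G x / m"] F0[OF that] G0[OF that] a0 m0 by simp
    also have "\<dots> = F x powr p / (p * A) + G x powr q / (q * M)"
      using F0[OF that] G0[OF that] a0 m0 by (simp add: powr_divide ap mq ac_simps)
    finally show ?thesis .
  qed
  have i1: "(\<lambda>x. F x powr p / (p * A)) integrable_on S"
    using integrable_on_cdivide_iff[of "p*A" "\<lambda>x. F x powr p" S] A0 assms(1) has_integral_integrable[OF iF] by simp
  have i2: "(\<lambda>x. G x powr q / (q * M)) integrable_on S"
    using integrable_on_cdivide_iff[of "q*M" "\<lambda>x. G x powr q" S] M0 assms(2) iG by simp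
  have fg: "(\<lambda>x. (F x / a) * (G x / m)) = (\<lambda>x. F x * G x / (a*m))" by auto
  have "integral S (\<lambda>x. F x * G x) / (a*m) = integral S (\<lambda>x. (F x / a) * (G x / m))"
    unfolding fg by simp
  also have "\<dots> \<le> integral S (\<lambda>x. F x powr p / (p * A) + G x powr q / (q * M))"
  proof (rule integral_le)
    show "(\<lambda>x. (F x / a) * (G x / m)) integrable_on S"
      unfolding fg using integrable_on_cdivide_iff[of "a*m" "\<lambda>x. F x * G x" S] a0 m0 iFG by simp
    show "(\<lambda>x. F x powr p / (p * A) + G x powr q / (q * M)) integrable_on S"
      using integrable_add[OF i1 i2] .
  qed (use pw in auto)
  also have "\<dots> = integral S (\<lambda>x. F x powr p) / (p * A) + integral S (\<lambda>x. G x powr q) / (q * M)"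
    using integral_add[OF i1 i2] by simp
  also have "\<dots> = A / (p * A) + integral S (\<lambda>x. G x powr q) / (q * M)"
    using integral_unique[OF iF] by simp
  also have "\<dots> \<le> A / (p * A) + M / (q * M)"
    using M0 GM assms(2) by (intro add_left_mono divide_right_mono) auto
  also have "\<dots> = 1" using A0 M0 assms(3) by simp
  finally have "integral S (\<lambda>x. F x * G x) / (a * m) \<le> 1" .
  then show ?thesis using a0 m0 by (simp add: a_def m_def divide_le_eq)
qed


lemma kern_up:
  fixes p u s e :: real
  assumes "p > 0" "u \<le> s" "s \<le> e"
  shows "((\<lambda>x. \<bar>x - u\<bar> powr p) has_integral ((e - u) powr (p+1) - (s - u) powr (p+1)) / (p+1)) {s..e}"
proof -
  define F where "F x = (x - u) powr (p+1) / (p+1)" for x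
  have "((\<lambda>x. \<bar>x - u\<bar> powr p) has_integral (F e - F s)) {s..e}"
  proof (rule fundamental_theorem_of_calculus_interior)
    show "s \<le> e" by fact
    show "continuous_on {s..e} F" unfolding F_def using assms
      by (auto intro!: continuous_intros continuous_on_powr')
    fix x assume x: "x \<in> {s<..<e}"
    then have xu: "x - u > 0" using assms by auto
    have "(F has_real_derivative (x - u) powr p) (at x)"
      unfolding F_def using xu assms
      by (auto intro!: derivative_eq_intros)
    then have "(F has_real_derivative \<bar>x - u\<bar> powr p) (at x)" using xu by simp
    then show "(F has_vector_derivative \<bar>x - u\<bar> powr p) (at x)"
      by (simp add: has_real_derivative_iff_has_vector_derivative)
  qed
  then show ?thesis by (simp add: F_def diff_divide_distrib)
qed

lemma kern_down:
  fixes p u s e :: real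
  assumes "p > 0" "s \<le> e" "e \<le> u"
  shows "((\<lambda>x. \<bar>x - u\<bar> powr p) has_integral ((u - s) powr (p+1) - (u - e) powr (p+1)) / (p+1)) {s..e}"
proof -
  define F where "F x = - ((u - x) powr (p+1) / (p+1))" for x
  have "((\<lambda>x. \<bar>x - u\<bar> powr p) has_integral (F e - F s)) {s..e}"
  proof (rule fundamental_theorem_of_calculus_interior)
    show "s \<le> e" by fact
    show "continuous_on {s..e} F" unfolding F_def using assms
      by (auto intro!: continuous_intros continuous_on_powr')
    fix x assume x: "x \<in> {s<..<e}"
    then have xu: "u - x > 0" using assms by auto
    have "(F has_real_derivative (u - x) powr p) (at x)"
      unfolding F_def using xu assms
      by (auto intro!: derivative_eq_intros)
    then have "(F has_real_derivative \<bar>x - u\<bar> powr p) (at x)" using xu by simp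
    then show "(F has_vector_derivative \<bar>x - u\<bar> powr p) (at x)"
      by (simp add: has_real_derivative_iff_has_vector_derivative)
  qed
  then show ?thesis by (simp add: F_def diff_divide_distrib)
qed

lemma kern_mid:
  fixes p u s e :: real
  assumes "p > 0" "s \<le> u" "u \<le> e"
  shows "((\<lambda>x. \<bar>x - u\<bar> powr p) has_integral ((u - s) powr (p+1) + (e - u) powr (p+1)) / (p+1)) {s..e}"
proof -
  have "((\<lambda>x. \<bar>x - u\<bar> powr p) has_integral ((u - s) powr (p+1) - (u - u) powr (p+1)) / (p+1)
     + ((e - u) powr (p+1) - (u - u) powr (p+1)) / (p+1)) {s..e}"
    by (rule has_integral_combine[OF assms(2,3) kern_down[OF assms(1,2) order_refl] kern_up[OF assms(1) order_refl assms(3)]])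
  then show ?thesis using assms(1) by (simp add: add_divide_distrib)
qed

lemma pos_up: fixes p u s e :: real assumes "p > 0" "u \<le> s" "s < e"
  shows "0 < ((e - u) powr (p+1) - (s - u) powr (p+1)) / (p+1)"
  using powr_less_mono2[of "p+1" "s-u" "e-u"] assms by simp

lemma pos_down: fixes p u s e :: real assumes "p > 0" "s < e" "e \<le> u"
  shows "0 < ((u - s) powr (p+1) - (u - e) powr (p+1)) / (p+1)"
  using powr_less_mono2[of "p+1" "u-e" "u-s"] assms by simp

lemma pos_mid: fixes p u s e :: real assumes "p > 0" "s \<le> u" "u \<le> e" "s < e"
  shows "0 < ((u - s) powr (p+1) + (e - u) powr (p+1)) / (p+1)"
proof (cases "s < u")
  case True
  then have "0 < (u - s) powr (p+1)" by simp
  moreover have "0 \<le> (e - u) powr (p+1)" by simp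
  ultimately show ?thesis using assms by (intro divide_pos_pos add_pos_nonneg) auto
next
  case False
  then have "0 < (e - u) powr (p+1)" using assms by simp
  moreover have "0 \<le> (u - s) powr (p+1)" by simp
  ultimately show ?thesis using assms by (intro divide_pos_pos add_nonneg_pos) auto
qed


lemma piece_ident:
  fixes f f' :: "real \<Rightarrow> real" and s e u :: real
  assumes der: "\<And>x. x \<in> {s..e} \<Longrightarrow> (f has_real_derivative f' x) (at x)"
    and se: "s \<le> e"
  shows "((\<lambda>x. (x - u) * f' x) has_integral ((e - u) * f e - (s - u) * f s - integral {s..e} f)) {s..e}"
proof -
  have contf: "continuous_on {s..e} f"
    using der by (intro continuous_at_imp_continuous_on) (meson DERIV_isCont)
  have intf: "(f has_integral integral {s..e} f) {s..e}"
    using integrable_continuous_interval[OF contf] by (simp add: has_integral_integral)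
  have "((\<lambda>x. f x + (x - u) * f' x) has_integral ((e - u) * f e - (s - u) * f s)) {s..e}"
  proof (rule fundamental_theorem_of_calculus[OF se])
    fix x assume x: "x \<in> {s..e}"
    have "((\<lambda>x. (x - u) * f x) has_real_derivative (f x + (x - u) * f' x)) (at x)"
      using der[OF x] by (auto intro!: derivative_eq_intros)
    then show "((\<lambda>x. (x - u) * f x) has_vector_derivative (f x + (x - u) * f' x)) (at x within {s..e})"
      by (simp add: has_real_derivative_iff_has_vector_derivative has_vector_derivative_at_within)
  qed
  from has_integral_diff[OF this intf] show ?thesis by simp
qed

lemma piece_bound:
  fixes f f' :: "real \<Rightarrow> real" and s e u p q A :: real
  assumes der: "\<And>x. x \<in> {s..e} \<Longrightarrow> (f has_real_derivative f' x) (at x)"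
    and absf: "(\<lambda>x. \<bar>f' x\<bar>) integrable_on {s..e}"
    and conv: "convex_on {s..e} (\<lambda>x. \<bar>f' x\<bar> powr q)"
    and pq: "p > 1" "q > 1" "1/p + 1/q = 1"
    and se: "s \<le> e"
    and kern: "((\<lambda>x. \<bar>x - u\<bar> powr p) has_integral A) {s..e}"
    and Apos: "s < e \<Longrightarrow> 0 < A"
  shows "\<bar>integral {s..e} (\<lambda>x. (x - u) * f' x)\<bar>
          \<le> A powr (1/p) * ((e - s) * (\<bar>f' s\<bar> powr q + \<bar>f' e\<bar> powr q) / 2) powr (1/q)"
proof (cases "s = e")
  case True
  then show ?thesis by simp
next
  case False
  with se have se': "s < e" by simp
  define M where "M = (e - s) * (\<bar>f' s\<bar> powr q + \<bar>f' e\<bar> powr q) / 2"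
  have M0: "M \<ge> 0" using se by (simp add: M_def)
  have ih: "(\<lambda>x. (x - u) * f' x) integrable_on {s..e}"
    using piece_ident[OF der se] by blast
  have cb: "\<bar>f' x\<bar> powr q \<le> ((e - x) * \<bar>f' s\<bar> powr q + (x - s) * \<bar>f' e\<bar> powr q) / (e - s)"
    if "x \<in> {s..e}" for x
    using convex_bound[OF se' conv that] .
  show ?thesis
  proof (cases "M = 0")
    case True
    then have z: "\<bar>f' s\<bar> powr q = 0" "\<bar>f' e\<bar> powr q = 0" using se'
      by (auto simp: M_def add_nonneg_eq_0_iff)
    have "f' x = 0" if "x \<in> {s..e}" for x
    proof -
      have "\<bar>f' x\<bar> powr q \<le> 0" using cb[OF that] z by simp
      then show ?thesis by (smt (verit) powr_eq_0_iff powr_ge_zero)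
    qed
    then have "integral {s..e} (\<lambda>x. (x - u) * f' x) = integral {s..e} (\<lambda>x. 0)"
      by (intro integral_cong) auto
    then show ?thesis by (simp add: M_def[symmetric])
  next
    case False
    with M0 have Mpos: "M > 0" by simp
    have measf: "(\<lambda>x. \<bar>f' x\<bar>) \<in> borel_measurable (lebesgue_on {s..e})"
      using integrable_imp_measurable[OF absf] .
    define K where "K = \<bar>s - u\<bar> + \<bar>e - u\<bar>"
    have Kb: "\<bar>x - u\<bar> \<le> K" if "x \<in> {s..e}" for x using that by (auto simp: K_def)
    have iK: "(\<lambda>x. K * \<bar>f' x\<bar>) integrable_on {s..e}"
      using integrable_on_cmult_left[OF absf, of K] by simp
    have iFG: "(\<lambda>x. \<bar>x - u\<bar> * \<bar>f' x\<bar>) integrable_on {s..e}"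
    proof (rule measurable_bounded_by_integrable_imp_integrable[OF _ iK])
      have "(\<lambda>x. \<bar>x - u\<bar>) \<in> borel_measurable (lebesgue_on {s..e})"
        by (rule continuous_imp_measurable_on_sets_lebesgue) (auto intro!: continuous_intros)
      then show "(\<lambda>x. \<bar>x - u\<bar> * \<bar>f' x\<bar>) \<in> borel_measurable (lebesgue_on {s..e})"
        using measf by (rule borel_measurable_times)
      show "norm (\<bar>x - u\<bar> * \<bar>f' x\<bar>) \<le> K * \<bar>f' x\<bar>" if "x \<in> {s..e}" for x
        using Kb[OF that] by (simp add: abs_mult mult_right_mono)
    qed auto
    have iG: "(\<lambda>x. \<bar>f' x\<bar> powr q) integrable_on {s..e}"
    proof (rule measurable_bounded_by_integrable_imp_integrable)
      show "(\<lambda>x. \<bar>f' x\<bar> powr q) \<in> borel_measurable (lebesgue_on {s..e})"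
        using powr_real_measurable[OF measf borel_measurable_const] .
      show "(\<lambda>x. \<bar>f' s\<bar> powr q + \<bar>f' e\<bar> powr q) integrable_on {s..e}"
        by (rule integrable_continuous_interval) (rule continuous_on_const)
      show "norm (\<bar>f' x\<bar> powr q) \<le> \<bar>f' s\<bar> powr q + \<bar>f' e\<bar> powr q" if "x \<in> {s..e}" for x
      proof -
        have "\<bar>f' x\<bar> powr q \<le> ((e - x) * \<bar>f' s\<bar> powr q + (x - s) * \<bar>f' e\<bar> powr q) / (e - s)"
          using cb[OF that] .
        also have "\<dots> \<le> ((e - s) * \<bar>f' s\<bar> powr q + (e - s) * \<bar>f' e\<bar> powr q) / (e - s)"
          using that se' by (intro divide_right_mono add_mono mult_right_mono) auto
        also have "\<dots> = \<bar>f' s\<bar> powr q + \<bar>f' e\<bar> powr q" using se' by (simp add: field_simps)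
        finally show ?thesis by simp
      qed
    qed auto
    have GM: "integral {s..e} (\<lambda>x. \<bar>f' x\<bar> powr q) \<le> M"
    proof -
      have lin: "((\<lambda>x. ((e - x) * \<bar>f' s\<bar> powr q + (x - s) * \<bar>f' e\<bar> powr q) / (e - s)) has_integral M) {s..e}"
        unfolding M_def by (rule linear_integral[OF se'])
      show ?thesis
        using integral_le[OF iG has_integral_integrable[OF lin] cb] integral_unique[OF lin] by simp
    qed
    have "\<bar>integral {s..e} (\<lambda>x. (x - u) * f' x)\<bar> \<le> integral {s..e} (\<lambda>x. \<bar>x - u\<bar> * \<bar>f' x\<bar>)"
      using integral_norm_bound_integral[OF ih iFG] by (simp add: abs_mult)
    also have "\<dots> \<le> A powr (1/p) * M powr (1/q)"
      by (rule holder_bound[OF pq _ _ kern iG GM iFG Apos[OF se'] Mpos]) auto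
    finally show ?thesis by (simp add: M_def)
  qed
qed


lemma scale_powr: fixes x B r :: real assumes "x \<ge> 0" "B > 0"
  shows "(x * B) powr r = B powr r * x powr r"
  using assms by (simp add: powr_mult mult.commute)

lemma kern_mid_sc:
  fixes p u s e B x y :: real
  assumes "p > 0" "B > 0" "x \<ge> 0" "y \<ge> 0" "u - s = x * B" "e - u = y * B"
  shows "((\<lambda>t. \<bar>t - u\<bar> powr p) has_integral B powr (p+1) * (x powr (p+1) + y powr (p+1)) / (p+1)) {s..e}"
    "s < e \<Longrightarrow> 0 < x powr (p+1) + y powr (p+1)"
proof -
  have "x * B \<ge> 0" "y * B \<ge> 0" using assms by simp_all
  then have su: "s \<le> u" "u \<le> e" using assms by linarith+
  have eq: "((u - s) powr (p+1) + (e - u) powr (p+1)) / (p+1) = B powr (p+1) * (x powr (p+1) + y powr (p+1)) / (p+1)"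
    using assms by (simp add: scale_powr distrib_left)
  show "((\<lambda>t. \<bar>t - u\<bar> powr p) has_integral B powr (p+1) * (x powr (p+1) + y powr (p+1)) / (p+1)) {s..e}"
    using kern_mid[OF assms(1) su] eq by simp
  assume "s < e"
  from pos_mid[OF assms(1) su this] eq have "0 < B powr (p+1) * (x powr (p+1) + y powr (p+1)) / (p+1)" by simp
  then show "0 < x powr (p+1) + y powr (p+1)" using assms(1,2)
    by (simp add: zero_less_divide_iff zero_less_mult_iff)
qed

lemma kern_down_sc:
  fixes p u s e B x y :: real
  assumes "p > 0" "B > 0" "y \<ge> 0" "s \<le> e" "u - s = x * B" "u - e = y * B"
  shows "((\<lambda>t. \<bar>t - u\<bar> powr p) has_integral B powr (p+1) * (x powr (p+1) - y powr (p+1)) / (p+1)) {s..e}"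
    "s < e \<Longrightarrow> 0 < x powr (p+1) - y powr (p+1)"
proof -
  have "y * B \<ge> 0" using assms by simp
  then have su: "e \<le> u" using assms by linarith
  have x0: "x \<ge> 0" using assms by (smt (verit) mult_le_cancel_right mult_nonneg_nonneg)
  have eq: "((u - s) powr (p+1) - (u - e) powr (p+1)) / (p+1) = B powr (p+1) * (x powr (p+1) - y powr (p+1)) / (p+1)"
    using assms x0 by (simp add: scale_powr right_diff_distrib)
  show "((\<lambda>t. \<bar>t - u\<bar> powr p) has_integral B powr (p+1) * (x powr (p+1) - y powr (p+1)) / (p+1)) {s..e}"
    using kern_down[OF assms(1,4) su] eq by simp
  assume "s < e"
  from pos_down[OF assms(1) this su] eq have "0 < B powr (p+1) * (x powr (p+1) - y powr (p+1)) / (p+1)" by simp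
  then show "0 < x powr (p+1) - y powr (p+1)" using assms(1,2)
    by (simp add: zero_less_divide_iff zero_less_mult_iff)
qed

lemma kern_up_sc:
  fixes p u s e B x y :: real
  assumes "p > 0" "B > 0" "y \<ge> 0" "s \<le> e" "e - u = x * B" "s - u = y * B"
  shows "((\<lambda>t. \<bar>t - u\<bar> powr p) has_integral B powr (p+1) * (x powr (p+1) - y powr (p+1)) / (p+1)) {s..e}"
    "s < e \<Longrightarrow> 0 < x powr (p+1) - y powr (p+1)"
proof -
  have "y * B \<ge> 0" using assms by simp
  then have su: "u \<le> s" using assms by linarith
  have x0: "x \<ge> 0" using assms by (smt (verit) mult_le_cancel_right mult_nonneg_nonneg)
  have eq: "((e - u) powr (p+1) - (s - u) powr (p+1)) / (p+1) = B powr (p+1) * (x powr (p+1) - y powr (p+1)) / (p+1)"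
    using assms x0 by (simp add: scale_powr right_diff_distrib)
  show "((\<lambda>t. \<bar>t - u\<bar> powr p) has_integral B powr (p+1) * (x powr (p+1) - y powr (p+1)) / (p+1)) {s..e}"
    using kern_up[OF assms(1) su assms(4)] eq by simp
  assume "s < e"
  from pos_up[OF assms(1) su this] eq have "0 < B powr (p+1) * (x powr (p+1) - y powr (p+1)) / (p+1)" by simp
  then show "0 < x powr (p+1) - y powr (p+1)" using assms(1,2)
    by (simp add: zero_less_divide_iff zero_less_mult_iff)
qed

lemma final_alg:
  fixes B E C p q :: real
  assumes "B > 0" "E \<ge> 0" "C \<ge> 0" "p > 1" "q > 1" "1/p + 1/q = 1"
  shows "(B powr (p+1) * E / (p+1)) powr (1/p) * (B * C / 2) powr (1/q)
       = B * (B * (1/(p+1)) powr (1/p) * (1/2) powr (1/q) * (E powr (1/p) * C powr (1/q)))"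
proof -
  have p0: "p \<noteq> 0" using assms by simp
  have "(B powr (p+1) * E / (p+1)) powr (1/p) = B powr ((p+1)/p) * (1/(p+1)) powr (1/p) * E powr (1/p)"
    using assms by (simp add: powr_mult powr_divide powr_powr)
  moreover have "(B * C / 2) powr (1/q) = B powr (1/q) * (1/2) powr (1/q) * C powr (1/q)"
    using assms by (simp add: powr_mult powr_divide)
  moreover have "B powr ((p+1)/p) * B powr (1/q) = B * B"
  proof -
    have "(p+1)/p + 1/q = 2" using assms(6) p0 by (simp add: add_divide_distrib)
    then have "B powr ((p+1)/p) * B powr (1/q) = B powr 2" by (simp flip: powr_add)
    also have "\<dots> = B * B" using assms(1) by (simp add: power2_eq_square)
    finally show ?thesis .
  qed
  ultimately show ?thesis by (simp add: ac_simps)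
qed


lemma main_gen:
  fixes f f' :: "real \<Rightarrow> real" and a b al lam p q E1 E2 :: real
  assumes der: "\<And>x. x \<in> {a..b} \<Longrightarrow> (f has_real_derivative f' x) (at x)"
    and absf: "(\<lambda>x. \<bar>f' x\<bar>) integrable_on {a..b}"
    and conv: "convex_on {a..b} (\<lambda>x. \<bar>f' x\<bar> powr q)"
    and pq: "p > 1" "q > 1" "1/p + 1/q = 1"
    and ab: "a < b" and al: "0 \<le> al" "al \<le> 1" and lam: "0 \<le> lam" "lam \<le> 1"
    and k1: "((\<lambda>t. \<bar>t - (a + al * lam * (b - a))\<bar> powr p) has_integral (b - a) powr (p+1) * E1 / (p+1)) {a..(1 - al) * b + al * a}"
    and p1: "a < (1 - al) * b + al * a \<Longrightarrow> 0 < E1" and e1: "E1 \<ge> 0"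
    and k2: "((\<lambda>t. \<bar>t - (b - lam * (1 - al) * (b - a))\<bar> powr p) has_integral (b - a) powr (p+1) * E2 / (p+1)) {(1 - al) * b + al * a..b}"
    and p2: "(1 - al) * b + al * a < b \<Longrightarrow> 0 < E2" and e2: "E2 \<ge> 0"
  shows "\<bar>I_f f lam al a b\<bar> \<le> (b - a) * (1 / (p + 1)) powr (1 / p) * (1 / 2) powr (1 / q) *
        (E1 powr (1 / p) * C_f f' a b al q powr (1 / q) + E2 powr (1 / p) * D_f f' a b al q powr (1 / q))"
proof -
  define c where "c = (1 - al) * b + al * a"
  define u where "u = a + al * lam * (b - a)"
  define v where "v = b - lam * (1 - al) * (b - a)"
  define B where "B = b - a"
  have B0: "B > 0" using ab by (simp add: B_def)
  have ca: "c - a = (1 - al) * B" by (simp add: c_def B_def algebra_simps)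
  have bc: "b - c = al * B" by (simp add: c_def B_def algebra_simps)
  have "(1 - al) * B \<ge> 0" "al * B \<ge> 0" using al B0 by simp_all
  then have ac: "a \<le> c" and cb: "c \<le> b" using ca bc by linarith+
  have p0: "p > 0" using pq by simp
  have der1: "\<And>x. x \<in> {a..c} \<Longrightarrow> (f has_real_derivative f' x) (at x)" using der cb by auto
  have der2: "\<And>x. x \<in> {c..b} \<Longrightarrow> (f has_real_derivative f' x) (at x)" using der ac by auto
  have abs1: "(\<lambda>x. \<bar>f' x\<bar>) integrable_on {a..c}" by (rule integrable_on_subinterval[OF absf]) (use cb in auto)
  have abs2: "(\<lambda>x. \<bar>f' x\<bar>) integrable_on {c..b}" by (rule integrable_on_subinterval[OF absf]) (use ac in auto)
  have conv1: "convex_on {a..c} (\<lambda>x. \<bar>f' x\<bar> powr q)" by (rule convex_on_subset[OF conv]) (use cb in auto)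
  have conv2: "convex_on {c..b} (\<lambda>x. \<bar>f' x\<bar> powr q)" by (rule convex_on_subset[OF conv]) (use ac in auto)
  define A1 where "A1 = B powr (p+1) * E1 / (p+1)"
  define A2 where "A2 = B powr (p+1) * E2 / (p+1)"
  have A1pos: "a < c \<Longrightarrow> 0 < A1" using p1 B0 p0 by (simp add: A1_def c_def)
  have A2pos: "c < b \<Longrightarrow> 0 < A2" using p2 B0 p0 by (simp add: A2_def c_def)
  have k1': "((\<lambda>x. \<bar>x - u\<bar> powr p) has_integral A1) {a..c}" using k1 by (simp add: A1_def B_def c_def u_def)
  have k2': "((\<lambda>x. \<bar>x - v\<bar> powr p) has_integral A2) {c..b}" using k2 by (simp add: A2_def B_def c_def v_def)
  define P1 where "P1 = integral {a..c} (\<lambda>x. (x - u) * f' x)"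
  define P2 where "P2 = integral {c..b} (\<lambda>x. (x - v) * f' x)"
  have bd1: "\<bar>P1\<bar> \<le> A1 powr (1/p) * ((c - a) * (\<bar>f' a\<bar> powr q + \<bar>f' c\<bar> powr q) / 2) powr (1/q)"
    unfolding P1_def by (rule piece_bound[OF der1 abs1 conv1 pq ac k1' A1pos])
  have bd2: "\<bar>P2\<bar> \<le> A2 powr (1/p) * ((b - c) * (\<bar>f' c\<bar> powr q + \<bar>f' b\<bar> powr q) / 2) powr (1/q)"
    unfolding P2_def by (rule piece_bound[OF der2 abs2 conv2 pq cb k2' A2pos])
  have id1: "P1 = (c - u) * f c - (a - u) * f a - integral {a..c} f"
    unfolding P1_def using piece_ident[OF der1 ac] by (rule integral_unique)
  have id2: "P2 = (b - v) * f b - (c - v) * f c - integral {c..b} f"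
    unfolding P2_def using piece_ident[OF der2 cb] by (rule integral_unique)
  have contf: "continuous_on {a..b} f"
    using der by (intro continuous_at_imp_continuous_on) (meson DERIV_isCont)
  have intsplit: "integral {a..c} f + integral {c..b} f = integral {a..b} f"
    by (rule Henstock_Kurzweil_Integration.integral_combine[OF ac cb integrable_continuous_interval[OF contf]])
  have cc: "al * a + (1 - al) * b = c" by (simp add: c_def algebra_simps)
  have ident: "B * I_f f lam al a b = P1 + P2"
  proof -
    have "B * I_f f lam al a b = B * (lam * (al * f a + (1 - al) * f b) + (1 - lam) * f c) - integral {a..b} f"
      using B0 unfolding I_f_def cc B_def[symmetric] by (simp add: right_diff_distrib)
    also have "\<dots> = P1 + P2"
      unfolding id1 id2 intsplit[symmetric] u_def v_def B_def by (simp add: algebra_simps)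
    finally show ?thesis .
  qed
  have Cdef: "(c - a) * (\<bar>f' a\<bar> powr q + \<bar>f' c\<bar> powr q) / 2 = B * C_f f' a b al q / 2"
    unfolding ca C_f_def c_def[symmetric] by (simp add: ac_simps)
  have Ddef: "(b - c) * (\<bar>f' c\<bar> powr q + \<bar>f' b\<bar> powr q) / 2 = B * D_f f' a b al q / 2"
    unfolding bc D_f_def c_def[symmetric] by (simp add: ac_simps)
  have C0: "C_f f' a b al q \<ge> 0" using al by (simp add: C_f_def)
  have D0: "D_f f' a b al q \<ge> 0" using al by (simp add: D_f_def)
  define K where "K = (1/(p+1)) powr (1/p) * (1/2) powr (1/q)"
  have "B * \<bar>I_f f lam al a b\<bar> = \<bar>P1 + P2\<bar>" using ident B0 by (simp flip: ident add: abs_mult)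
  also have "\<dots> \<le> \<bar>P1\<bar> + \<bar>P2\<bar>" by (rule abs_triangle_ineq)
  also have "\<dots> \<le> B * (B * K * (E1 powr (1/p) * C_f f' a b al q powr (1/q)))
                 + B * (B * K * (E2 powr (1/p) * D_f f' a b al q powr (1/q)))"
    using bd1 bd2 unfolding Cdef Ddef A1_def A2_def K_def
    using final_alg[OF B0 e1 C0 pq] final_alg[OF B0 e2 D0 pq] by (simp add: ac_simps)
  finally have "B * \<bar>I_f f lam al a b\<bar> \<le> B * (B * K * (E1 powr (1/p) * C_f f' a b al q powr (1/q) + E2 powr (1/p) * D_f f' a b al q powr (1/q)))"
    by (simp add: algebra_simps)
  then have "\<bar>I_f f lam al a b\<bar> \<le> B * K * (E1 powr (1/p) * C_f f' a b al q powr (1/q) + E2 powr (1/p) * D_f f' a b al q powr (1/q))"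
    using B0 by simp
  then show ?thesis by (simp add: B_def K_def ac_simps)
qed


theorem mainTheorem4:
  fixes I :: "real set" and f f' :: "real \<Rightarrow> real" and a b al lam p q :: real
  assumes "is_interval I"
    and "\<And>x. x \<in> interior I \<Longrightarrow> (f has_real_derivative f' x) (at x)"
    and "a \<in> interior I" and "b \<in> interior I" and "a < b"
    and "set_integrable lborel {a..b} f'"
    and "0 \<le> al" and "al \<le> 1" and "0 \<le> lam" and "lam \<le> 1"
    and "q > 1" and "1 / p + 1 / q = 1"
    and "convex_on {a..b} (\<lambda>x. \<bar>f' x\<bar> powr q)"
  shows
   "(al * lam \<le> 1 - al \<and> 1 - al \<le> 1 - lam * (1 - al) \<longrightarrow>
      \<bar>I_f f lam al a b\<bar> \<le> (b - a) * (1 / (p + 1)) powr (1 / p) * (1 / 2) powr (1 / q) *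
        (eps1 al lam p powr (1 / p) * C_f f' a b al q powr (1 / q)
         + eps1 (1 - al) lam p powr (1 / p) * D_f f' a b al q powr (1 / q)))
  \<and> (al * lam \<le> 1 - lam * (1 - al) \<and> 1 - lam * (1 - al) \<le> 1 - al \<longrightarrow>
      \<bar>I_f f lam al a b\<bar> \<le> (b - a) * (1 / (p + 1)) powr (1 / p) * (1 / 2) powr (1 / q) *
        (eps1 al lam p powr (1 / p) * C_f f' a b al q powr (1 / q)
         + eps2 (1 - al) lam p powr (1 / p) * D_f f' a b al q powr (1 / q)))
  \<and> (1 - al \<le> al * lam \<and> al * lam \<le> 1 - lam * (1 - al) \<longrightarrow>
      \<bar>I_f f lam al a b\<bar> \<le> (b - a) * (1 / (p + 1)) powr (1 / p) * (1 / 2) powr (1 / q) *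
        (eps2 al lam p powr (1 / p) * C_f f' a b al q powr (1 / q)
         + eps1 (1 - al) lam p powr (1 / p) * D_f f' a b al q powr (1 / q)))"
proof -
  note ab = assms(5) and al = assms(7,8) and lam = assms(9,10) and conv = assms(13)
  have q1: "q > 1" by fact
  have pq: "p > 1" "q > 1" "1/p + 1/q = 1"
  proof -
    have "1/q < 1" using q1 by simp
    then have "1/p > 0" using assms(12) by linarith
    moreover have "1/p < 1"
    proof -
      have "1/q > 0" using q1 by simp
      then show ?thesis using assms(12) by linarith
    qed
    ultimately show "p > 1" by (simp add: field_simps)
  qed (use assms in auto)
  have p0: "p > 0" using pq by simp
  have ivI: "is_interval (interior I)"
    using assms(1) by (simp add: is_interval_convex_1)
  have der: "\<And>x. x \<in> {a..b} \<Longrightarrow> (f has_real_derivative f' x) (at x)"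
    using assms(2) mem_is_interval_1_I[OF ivI assms(3,4)] by auto
  have absf: "(\<lambda>x. \<bar>f' x\<bar>) integrable_on {a..b}"
    using set_borel_integral_eq_integral(1)[OF set_integrable_norm[OF assms(6)]] by simp
  define B where "B = b - a"
  have B0: "B > 0" using ab by (simp add: B_def)
  let ?c = "(1 - al) * b + al * a"
  let ?u = "a + al * lam * (b - a)"
  let ?v = "b - lam * (1 - al) * (b - a)"
  note gen = main_gen[OF der absf conv pq ab al lam]
  have ac: "a \<le> ?c" and cb: "?c \<le> b"
  proof -
    have "(1 - al) * B \<ge> 0" "al * B \<ge> 0" using al B0 by simp_all
    moreover have "?c - a = (1 - al) * B" "b - ?c = al * B" by (simp_all add: B_def algebra_simps)
    ultimately show "a \<le> ?c" "?c \<le> b" by linarith+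
  qed
  have K1mid: "((\<lambda>t. \<bar>t - ?u\<bar> powr p) has_integral (b - a) powr (p+1) * eps1 al lam p / (p+1)) {a..?c}
        \<and> (a < ?c \<longrightarrow> 0 < eps1 al lam p)" if h: "al * lam \<le> 1 - al"
  proof -
    have y0: "1 - al - al * lam \<ge> 0" using h by simp
    have e1: "?u - a = (al * lam) * B" "?c - ?u = (1 - al - al * lam) * B"
      by (simp_all add: B_def algebra_simps)
    note k = kern_mid_sc[OF p0 B0 _ y0 e1, unfolded B_def]
    show ?thesis using k al lam by (simp add: eps1_def)
  qed
  have K1down: "((\<lambda>t. \<bar>t - ?u\<bar> powr p) has_integral (b - a) powr (p+1) * eps2 al lam p / (p+1)) {a..?c}
        \<and> (a < ?c \<longrightarrow> 0 < eps2 al lam p)" if h: "1 - al \<le> al * lam"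
  proof -
    have y0: "al * lam - 1 + al \<ge> 0" using h by simp
    have e1: "?u - a = (al * lam) * B" "?u - ?c = (al * lam - 1 + al) * B"
      by (simp_all add: B_def algebra_simps)
    note k = kern_down_sc[OF p0 B0 y0 ac e1, unfolded B_def]
    show ?thesis using k by (simp add: eps2_def)
  qed
  have K2mid: "((\<lambda>t. \<bar>t - ?v\<bar> powr p) has_integral (b - a) powr (p+1) * eps1 (1 - al) lam p / (p+1)) {?c..b}
        \<and> (?c < b \<longrightarrow> 0 < eps1 (1 - al) lam p)" if h: "1 - al \<le> 1 - lam * (1 - al)"
  proof -
    have y0: "1 - (1 - al) - (1 - al) * lam \<ge> 0" using h by (simp add: algebra_simps)
    have e1: "?v - ?c = (1 - (1 - al) - (1 - al) * lam) * B" "b - ?v = ((1 - al) * lam) * B"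
      by (simp_all add: B_def algebra_simps)
    note k = kern_mid_sc[OF p0 B0 y0 _ e1, unfolded B_def]
    show ?thesis using k al lam by (simp add: eps1_def add.commute)
  qed
  have K2up: "((\<lambda>t. \<bar>t - ?v\<bar> powr p) has_integral (b - a) powr (p+1) * eps2 (1 - al) lam p / (p+1)) {?c..b}
        \<and> (?c < b \<longrightarrow> 0 < eps2 (1 - al) lam p)" if h: "1 - lam * (1 - al) \<le> 1 - al"
  proof -
    have y0: "(1 - al) * lam - 1 + (1 - al) \<ge> 0" using h by (simp add: algebra_simps)
    have e1: "b - ?v = ((1 - al) * lam) * B" "?c - ?v = ((1 - al) * lam - 1 + (1 - al)) * B"
      by (simp_all add: B_def algebra_simps)
    note k = kern_up_sc[OF p0 B0 y0 cb e1, unfolded B_def]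
    show ?thesis using k by (simp add: eps2_def)
  qed
  have E1: "eps1 x y p \<ge> 0" for x y by (simp add: eps1_def)
  have E2a: "eps2 al lam p \<ge> 0" if h: "1 - al \<le> al * lam"
  proof -
    have "(al * lam - 1 + al) powr (p+1) \<le> (al * lam) powr (p+1)"
      using h al p0 by (intro powr_mono2) auto
    then show ?thesis by (simp add: eps2_def)
  qed
  have E2b: "eps2 (1 - al) lam p \<ge> 0" if h: "1 - lam * (1 - al) \<le> 1 - al"
  proof -
    have "((1 - al) * lam - 1 + (1 - al)) powr (p+1) \<le> ((1 - al) * lam) powr (p+1)"
      using h al p0 by (intro powr_mono2) (auto simp: algebra_simps)
    then show ?thesis by (simp add: eps2_def)
  qed
  show ?thesis
  proof (intro conjI impI; elim conjE)
    assume h1: "al * lam \<le> 1 - al" and h2: "1 - al \<le> 1 - lam * (1 - al)"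
    show "\<bar>I_f f lam al a b\<bar> \<le> (b - a) * (1 / (p + 1)) powr (1 / p) * (1 / 2) powr (1 / q) *
        (eps1 al lam p powr (1 / p) * C_f f' a b al q powr (1 / q)
         + eps1 (1 - al) lam p powr (1 / p) * D_f f' a b al q powr (1 / q))"
      using K1mid[OF h1] K2mid[OF h2] by (intro gen) (auto simp: E1)
  next
    assume h1: "al * lam \<le> 1 - lam * (1 - al)" and h2: "1 - lam * (1 - al) \<le> 1 - al"
    have h1': "al * lam \<le> 1 - al"
    proof -
      have "al * lam \<le> al" using al lam by (simp add: mult_left_le)
      moreover have "al \<le> lam * (1 - al)" using h2 by simp
      moreover have "lam * (1 - al) \<le> 1 - al" using al lam by (simp add: mult_left_le_one_le)
      ultimately show ?thesis by linarith
    qed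
    show "\<bar>I_f f lam al a b\<bar> \<le> (b - a) * (1 / (p + 1)) powr (1 / p) * (1 / 2) powr (1 / q) *
        (eps1 al lam p powr (1 / p) * C_f f' a b al q powr (1 / q)
         + eps2 (1 - al) lam p powr (1 / p) * D_f f' a b al q powr (1 / q))"
      using K1mid[OF h1'] K2up[OF h2] E2b[OF h2] by (intro gen) (auto simp: E1)
  next
    assume h1: "1 - al \<le> al * lam" and h2: "al * lam \<le> 1 - lam * (1 - al)"
    have h2': "1 - al \<le> 1 - lam * (1 - al)"
    proof -
      have "lam * (1 - al) \<le> 1 - al" using al lam by (simp add: mult_left_le_one_le)
      moreover have "1 - al \<le> al * lam" by fact
      moreover have "al * lam \<le> al" using al lam by (simp add: mult_left_le)
      ultimately show ?thesis by linarith
    qed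
    show "\<bar>I_f f lam al a b\<bar> \<le> (b - a) * (1 / (p + 1)) powr (1 / p) * (1 / 2) powr (1 / q) *
        (eps2 al lam p powr (1 / p) * C_f f' a b al q powr (1 / q)
         + eps1 (1 - al) lam p powr (1 / p) * D_f f' a b al q powr (1 / q))"
      using K1down[OF h1] K2mid[OF h2'] E2a[OF h1] by (intro gen) (auto simp: E1)
  qed
qed

end
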